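(* $\lim_{\varepsilon\to0}\beta_\varepsilon(\Phi_\varepsilon(y))=y$ uniformly in $y\in M$.
   Context: Let $s\in(0,1)$, $N>2s$, $0<\mu<2s$, $2_s^*=\frac{2N}{N-2s}$. $V:\mathbb{R}^N\to\mathbb{R}$ continuous, $\inf V=V_0>0$, and there is a bounded open $\Lambda\subset\mathbb{R}^N$ with $V_0<\min_{\partial\Lambda}V$; $M=\{x\in\Lambda:V(x)=V_0\}$, $M_\delta=\{x:\mathrm{dist}(x,M)\le\delta\}$. $f:\mathbb{R}\to\mathbb{R}$ continuous, $f(t)=0$ for $t<0$, $\lim_{t\to0}f(t)/t=0$, $\lim_{t\to\infty}f(t)/t^{q-1}=0$ for some $q\in(2,\frac{2_s^*}{2}(2-\frac{\mu}{N}))$, $0<4F(t)\le2f(t)t$ for $t>0$ ($F(t)=\int_0^tf$), $t\mapsto f(t)/t$ increasing on $(0,\infty)$. Penalization: for $\ell>2$ and $a>0$ with $f(a)/a=V_0/\ell$, $\tilde f(t)=f(t)$ ($t\le a$), $\tilde f(t)=\frac{V_0}{\ell}t$ ($t>a$), $g(x,t)=\chi_\Lambda(x)f(t)+(1-\chi_\Lambda(x))\tilde f(t)$, $G(x,t)=\int_0^tg(x,\tau)d\tau$; $H^s_\varepsilon$ is the completion of $C_c^\infty(\mathbb{R}^N)$ under $\|u\|_\varepsilon^2=\iint\frac{|u(x)-u(y)|^2}{|x-y|^{N+2s}}dxdy+\int V(\varepsilon x)u^2dx$; $\tilde K_\varepsilon(u)(x)=\int\frac{G(\varepsilon y,u(y))}{|x-y|^\mu}dy$;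 $J_\varepsilon(u)=\frac12\|u\|_\varepsilon^2-\frac12\int\tilde K_\varepsilon(u)G(\varepsilon x,u)dx$; $c_\varepsilon=\inf_{u\ne0}\max_{t\ge0}J_\varepsilon(tu)$; $\kappa>0$ is a constant independent of $\varepsilon,\ell,a$ with $c_\varepsilon<\kappa$ for all $\varepsilon$; $\mathcal{B}=\{u:\|u\|_\varepsilon^2\le4(\kappa+1)\}$; the parameters are $\ell=\ell_0$ and $a$ with $f(a)/a=V_0/\ell_0$, where $\ell_0>2$ is such that $\sup_{u\in\mathcal{B}}\|\tilde K_\varepsilon(u)\|_{L^\infty}<\ell_0/2$ for all $\varepsilon>0$. $\mathcal{N}_\varepsilon=\{u\ne0:\langle J_\varepsilon'(u),u\rangle=0\}$. $w$ is a positive ground state of $J_{V_0}(u)=\frac12\big(\iint\frac{|u(x)-u(y)|^2}{|x-y|^{N+2s}}+V_0\int u^2\big)-\frac12\int(\frac{1}{|x|^\mu}*F(u))F(u)$ on $H^s(\mathbb{R}^N)$. Fix $\delta>0$ with $M_\delta\subset\Lambda$, and $\eta\in C_c^\infty([0,\infty),[0,1])$ with $\eta=1$ on $[0,\delta/2]$, $\eta=0$ on $[\delta,\infty)$. For $y\in M$: $\Psi_{\varepsilon,y}(x)=\eta(|\varepsilon x-y|)w(\frac{\varepsilon x-y}{\varepsilon})$, $t_\varepsilon>0$ the unique maximizer of $t\mapsto J_\varepsilon(t\Psi_{\varepsilon,y})$, $\Phi_\varepsilon(y)=t_\varepsilon\Psi_{\varepsilon,y}$. Fix $\rho>0$ with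 $M_\delta\subset B_\rho(0)$, let $\Upsilon(x)=x$ for $|x|\le\rho$ and $\Upsilon(x)=\rho x/|x|$ for $|x|\ge\rho$, and define $\beta_\varepsilon:\mathcal{N}_\varepsilon\to\mathbb{R}^N$ by $\beta_\varepsilon(u)=\frac{\int\Upsilon(\varepsilon x)u^2(x)dx}{\int u^2(x)dx}$. *)

theory Defs
  imports "HOL-Analysis.Analysis"
begin

definition prim :: "(real \<Rightarrow> real) \<Rightarrow> real \<Rightarrow> real" where
  "prim h t = (if 0 \<le> t then integral {0..t} h else - integral {t..0} h)"

definition gagliardo :: "real \<Rightarrow> ('a::euclidean_space \<Rightarrow> real) \<Rightarrow> ennreal" where
  "gagliardo s u = (\<integral>\<^sup>+ x. (\<integral>\<^sup>+ y. ennreal ((u x - u y)^2 / norm (x - y) powr (real DIM('a) + 2 * s)) \<partial>lborel) \<partial>lborel)"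

definition eps_norm_sq :: "('a::euclidean_space \<Rightarrow> real) \<Rightarrow> real \<Rightarrow> real \<Rightarrow> ('a \<Rightarrow> real) \<Rightarrow> ennreal" where
  "eps_norm_sq V s \<epsilon> u = gagliardo s u + (\<integral>\<^sup>+ x. ennreal (V (\<epsilon> *\<^sub>R x) * (u x)^2) \<partial>lborel)"

text \<open>H^s_eps: functions with finite eps-norm (equals the completion of C_c^infty).\<close>
definition H_eps :: "('a::euclidean_space \<Rightarrow> real) \<Rightarrow> real \<Rightarrow> real \<Rightarrow> ('a \<Rightarrow> real) set" where
  "H_eps V s \<epsilon> = {u. u \<in> borel_measurable lborel \<and> eps_norm_sq V s \<epsilon> u < \<infinity>}"

definition Hs :: "real \<Rightarrow> ('a::euclidean_space \<Rightarrow> real) set" where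
  "Hs s = {u. u \<in> borel_measurable lborel \<and> gagliardo s u < \<infinity> \<and>
              (\<integral>\<^sup>+ x. ennreal ((u x)^2) \<partial>lborel) < \<infinity>}"

definition riesz_pot :: "real \<Rightarrow> ('a::euclidean_space \<Rightarrow> real) \<Rightarrow> 'a \<Rightarrow> real" where
  "riesz_pot \<mu> h x = (LINT y|lborel. h y / norm (x - y) powr \<mu>)"

definition f_tilde :: "(real \<Rightarrow> real) \<Rightarrow> real \<Rightarrow> real \<Rightarrow> real \<Rightarrow> real \<Rightarrow> real" where
  "f_tilde f a l V0 t = (if t \<le> a then f t else V0 / l * t)"

definition pen_g :: "'a set \<Rightarrow> (real \<Rightarrow> real) \<Rightarrow> real \<Rightarrow> real \<Rightarrow> real \<Rightarrow> 'a \<Rightarrow> real \<Rightarrow> real" where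
  "pen_g \<Lambda> f a l V0 x t = indicator \<Lambda> x * f t + (1 - indicator \<Lambda> x) * f_tilde f a l V0 t"

definition pen_G :: "'a set \<Rightarrow> (real \<Rightarrow> real) \<Rightarrow> real \<Rightarrow> real \<Rightarrow> real \<Rightarrow> 'a \<Rightarrow> real \<Rightarrow> real" where
  "pen_G \<Lambda> f a l V0 x t = prim (pen_g \<Lambda> f a l V0 x) t"

definition K_eps :: "real \<Rightarrow> ('a::euclidean_space \<Rightarrow> real \<Rightarrow> real) \<Rightarrow> real \<Rightarrow> ('a \<Rightarrow> real) \<Rightarrow> 'a \<Rightarrow> real" where
  "K_eps \<mu> Gp \<epsilon> u = riesz_pot \<mu> (\<lambda>y. Gp (\<epsilon> *\<^sub>R y) (u y))"

definition J_eps :: "('a::euclidean_space \<Rightarrow> real) \<Rightarrow> real \<Rightarrow> real \<Rightarrow> ('a \<Rightarrow> real \<Rightarrow> real) \<Rightarrow> real \<Rightarrow> ('a \<Rightarrow> real) \<Rightarrow> real" where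
  "J_eps V s \<mu> Gp \<epsilon> u = 1/2 * enn2real (eps_norm_sq V s \<epsilon> u)
      - 1/2 * (LINT x|lborel. K_eps \<mu> Gp \<epsilon> u x * Gp (\<epsilon> *\<^sub>R x) (u x))"

text \<open>Mountain-pass type level c_eps (extended reals, to avoid junk values).\<close>
definition c_eps :: "('a::euclidean_space \<Rightarrow> real) \<Rightarrow> real \<Rightarrow> real \<Rightarrow> ('a \<Rightarrow> real \<Rightarrow> real) \<Rightarrow> real \<Rightarrow> ereal" where
  "c_eps V s \<mu> Gp \<epsilon> =
     (INF u\<in>{u \<in> H_eps V s \<epsilon>. \<not> (AE x in lborel. u x = 0)}.
        (SUP \<tau>\<in>{0..}. ereal (J_eps V s \<mu> Gp \<epsilon> (\<lambda>x. \<tau> * u x))))"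

definition ball_B :: "('a::euclidean_space \<Rightarrow> real) \<Rightarrow> real \<Rightarrow> real \<Rightarrow> real \<Rightarrow> ('a \<Rightarrow> real) set" where
  "ball_B V s \<epsilon> \<kappa> = {u \<in> H_eps V s \<epsilon>. eps_norm_sq V s \<epsilon> u \<le> ennreal (4 * (\<kappa> + 1))}"

definition J_V0 :: "real \<Rightarrow> real \<Rightarrow> real \<Rightarrow> (real \<Rightarrow> real) \<Rightarrow> ('a::euclidean_space \<Rightarrow> real) \<Rightarrow> real" where
  "J_V0 V0 s \<mu> f u = 1/2 * (enn2real (gagliardo s u) + V0 * (LINT x|lborel. (u x)^2))
      - 1/2 * (LINT x|lborel. riesz_pot \<mu> (\<lambda>y. prim f (u y)) x * prim f (u x))"

definition critical_point :: "(('a \<Rightarrow> real) \<Rightarrow> real) \<Rightarrow> ('a \<Rightarrow> real) set \<Rightarrow> ('a \<Rightarrow> real) \<Rightarrow> bool" where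
  "critical_point J H u \<longleftrightarrow> u \<in> H \<and>
     (\<forall>\<phi>\<in>H. ((\<lambda>\<tau>. J (\<lambda>x. u x + \<tau> * \<phi> x)) has_real_derivative 0) (at 0))"

definition ground_state :: "(('a::euclidean_space \<Rightarrow> real) \<Rightarrow> real) \<Rightarrow> ('a \<Rightarrow> real) set \<Rightarrow> ('a \<Rightarrow> real) \<Rightarrow> bool" where
  "ground_state J H u \<longleftrightarrow> critical_point J H u \<and> \<not> (AE x in lborel. u x = 0) \<and>
     (\<forall>v. critical_point J H v \<and> \<not> (AE x in lborel. v x = 0) \<longrightarrow> J u \<le> J v)"

definition Upsilon :: "real \<Rightarrow> 'a::euclidean_space \<Rightarrow> 'a" where
  "Upsilon \<rho> x = (if norm x \<le> \<rho> then x else (\<rho> / norm x) *\<^sub>R x)"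

definition beta_eps :: "real \<Rightarrow> real \<Rightarrow> ('a::euclidean_space \<Rightarrow> real) \<Rightarrow> 'a" where
  "beta_eps \<rho> \<epsilon> u = (1 / (LINT x|lborel. (u x)^2)) *\<^sub>R (LINT x|lborel. (u x)^2 *\<^sub>R Upsilon \<rho> (\<epsilon> *\<^sub>R x))"

definition Psi_eps :: "(real \<Rightarrow> real) \<Rightarrow> ('a::euclidean_space \<Rightarrow> real) \<Rightarrow> real \<Rightarrow> 'a \<Rightarrow> 'a \<Rightarrow> real" where
  "Psi_eps \<eta> w \<epsilon> y x = \<eta> (norm (\<epsilon> *\<^sub>R x - y)) * w ((1 / \<epsilon>) *\<^sub>R (\<epsilon> *\<^sub>R x - y))"

end

theory Submission
  imports Defs
begin



lemma Upsilon_meas: "Upsilon \<rho> \<in> borel_measurable (borel :: 'a::euclidean_space measure)"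
proof -
  have "Upsilon \<rho> = (\<lambda>x::'a. if norm x \<le> \<rho> then x else (\<rho> / norm x) *\<^sub>R x)"
    by (rule ext) (simp add: Upsilon_def)
  moreover have "(\<lambda>x::'a. if norm x \<le> \<rho> then x else (\<rho> / norm x) *\<^sub>R x) \<in> borel_measurable borel"
    by measurable
  ultimately show ?thesis by simp
qed

lemma Upsilon_norm: "\<rho> > 0 \<Longrightarrow> norm (Upsilon \<rho> x) \<le> \<rho>"
  by (auto simp: Upsilon_def)

lemma eta_cont:
  fixes \<eta> :: "real \<Rightarrow> real"
  assumes "\<And>x. x > 0 \<Longrightarrow> \<eta> differentiable (at x)" "\<And>r. 0 \<le> r \<Longrightarrow> r \<le> d \<Longrightarrow> \<eta> r = 1" "d > 0"
  shows "continuous_on {0..} \<eta>"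
proof (rule continuous_on_eq_continuous_within[THEN iffD2], intro ballI)
  fix x :: real assume x: "x \<in> {0..}"
  show "continuous (at x within {0..}) \<eta>"
  proof (cases "x > 0")
    case True
    then show ?thesis using assms(1) differentiable_imp_continuous_within differentiable_at_withinI by blast
  next
    case False
    with x have x0: "x = 0" by simp
    have "continuous (at x within {0..}) (\<lambda>_. 1::real)" by simp
    then show ?thesis
      by (rule continuous_transform_within[where \<delta>=d]) (use assms x0 in \<open>auto simp: dist_real_def\<close>)
  qed
qed


lemma trans_integrable:
  fixes h :: "'a::euclidean_space \<Rightarrow> 'b::{banach,second_countable_topology}"
  assumes "integrable lborel h"
  shows "integrable lborel (\<lambda>x. h (x - c))"
proof -
  have "integrable (distr lborel borel ((+) (-c))) h" using assms by (simp add: lborel_distr_plus)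
  then have "integrable lborel (\<lambda>x. h (-c + x))"
    using assms by (subst (asm) integrable_distr_eq) auto
  then show ?thesis by simp
qed

lemma trans_integral:
  fixes h :: "'a::euclidean_space \<Rightarrow> 'b::{banach,second_countable_topology}"
  assumes "h \<in> borel_measurable borel"
  shows "(LINT x|lborel. h (x - c)) = (LINT x|lborel. h x)"
proof -
  have "(LINT x|lborel. h x) = integral\<^sup>L (distr lborel borel ((+) (-c))) h" by (simp add: lborel_distr_plus)
  also have "\<dots> = (LINT x|lborel. h (-c + x))" using assms by (subst integral_distr) auto
  finally show ?thesis by simp
qed

theorem lemma4p2:
  fixes s \<mu> q V0 l0 a \<kappa> \<delta> \<rho> :: real
    and V :: "'a::euclidean_space \<Rightarrow> real"
    and \<Lambda> M :: "'a set"
    and f \<eta> :: "real \<Rightarrow> real"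
    and w :: "'a \<Rightarrow> real"
    and t :: "real \<Rightarrow> 'a \<Rightarrow> real"
  assumes s: "0 < s" "s < 1"
    and N: "real DIM('a) > 2 * s"
    and mu: "0 < \<mu>" "\<mu> < 2 * s"
    and q: "2 < q" "q < (2 * real DIM('a) / (real DIM('a) - 2 * s)) / 2 * (2 - \<mu> / real DIM('a))"
    and V_cont: "continuous_on UNIV V"
    and V_ge: "\<And>x. V0 \<le> V x" and V_inf: "V0 = (INF x. V x)" and V0_pos: "V0 > 0"
    and Lambda: "open \<Lambda>" "bounded \<Lambda>" "\<And>x. x \<in> frontier \<Lambda> \<Longrightarrow> V0 < V x"
    and M_def: "M = {x \<in> \<Lambda>. V x = V0}"
    and f_cont: "continuous_on UNIV f"
    and f_neg: "\<And>\<tau>. \<tau> < 0 \<Longrightarrow> f \<tau> = 0"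
    and f_0: "((\<lambda>\<tau>. f \<tau> / \<tau>) \<longlongrightarrow> 0) (at 0)"
    and f_inf: "((\<lambda>\<tau>. f \<tau> / \<tau> powr (q - 1)) \<longlongrightarrow> 0) at_top"
    and AR: "\<And>\<tau>. \<tau> > 0 \<Longrightarrow> 0 < 4 * prim f \<tau> \<and> 4 * prim f \<tau> \<le> 2 * f \<tau> * \<tau>"
    and f_mono: "strict_mono_on {0<..} (\<lambda>\<tau>. f \<tau> / \<tau>)"
    and kappa: "\<kappa> > 0"
      "\<And>l b \<epsilon>. l > 2 \<Longrightarrow> b > 0 \<Longrightarrow> f b / b = V0 / l \<Longrightarrow> \<epsilon> > 0 \<Longrightarrow>
          c_eps V s \<mu> (pen_G \<Lambda> f b l V0) \<epsilon> < ereal \<kappa>"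
    and l0: "l0 > 2" and a: "a > 0" "f a / a = V0 / l0"
    and l0_K: "\<And>\<epsilon>. \<epsilon> > 0 \<Longrightarrow> \<exists>C < l0 / 2. \<forall>u \<in> ball_B V s \<epsilon> \<kappa>.
                  AE x in lborel. \<bar>K_eps \<mu> (pen_G \<Lambda> f a l0 V0) \<epsilon> u x\<bar> \<le> C"
    and w_gs: "ground_state (J_V0 V0 s \<mu> f) (Hs s) w" and w_pos: "\<And>x. w x > 0"
    and delta: "\<delta> > 0" "{x. infdist x M \<le> \<delta>} \<subseteq> \<Lambda>"
    and eta_smooth: "\<And>k x. x > 0 \<Longrightarrow> ((deriv ^^ k) \<eta>) differentiable (at x)"
    and eta_range: "\<And>r. r \<ge> 0 \<Longrightarrow> 0 \<le> \<eta> r \<and> \<eta> r \<le> 1"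
    and eta_1: "\<And>r. 0 \<le> r \<Longrightarrow> r \<le> \<delta> / 2 \<Longrightarrow> \<eta> r = 1"
    and eta_0: "\<And>r. r \<ge> \<delta> \<Longrightarrow> \<eta> r = 0"
    and rho: "\<rho> > 0" "{x. infdist x M \<le> \<delta>} \<subseteq> ball 0 \<rho>"
    and t_max: "\<And>\<epsilon> y. \<epsilon> > 0 \<Longrightarrow> y \<in> M \<Longrightarrow> t \<epsilon> y > 0 \<and>
         (\<forall>\<tau>\<ge>0. \<tau> \<noteq> t \<epsilon> y \<longrightarrow>
            J_eps V s \<mu> (pen_G \<Lambda> f a l0 V0) \<epsilon> (\<lambda>x. \<tau> * Psi_eps \<eta> w \<epsilon> y x)
            < J_eps V s \<mu> (pen_G \<Lambda> f a l0 V0) \<epsilon> (\<lambda>x. t \<epsilon> y * Psi_eps \<eta> w \<epsilon> y x))"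
  shows "uniform_limit M (\<lambda>\<epsilon> y. beta_eps \<rho> \<epsilon> (\<lambda>x. t \<epsilon> y * Psi_eps \<eta> w \<epsilon> y x)) (\<lambda>y. y) (at_right 0)"
  proof -
  have wH: "w \<in> Hs s" using w_gs by (simp add: ground_state_def critical_point_def)
  hence wm: "w \<in> borel_measurable borel" and wfin: "(\<integral>\<^sup>+x. ennreal ((w x)^2) \<partial>lborel) < \<infinity>"
    by (simp_all add: Hs_def)
  define W where "W = (\<lambda>z::'a. (w z)^2)"
  have Wm: "W \<in> borel_measurable borel" unfolding W_def using wm by measurable
  have W0: "\<And>z. W z > 0" unfolding W_def using w_pos by (metis less_irrefl zero_less_power2)
  have intW: "integrable lborel W"
  proof (rule integrableI_bounded)
    show "W \<in> borel_measurable lborel" using Wm by simp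
    show "(\<integral>\<^sup>+x. ennreal (norm (W x)) \<partial>lborel) < \<infinity>" using wfin by (simp add: W_def)
  qed
  have etac: "continuous_on {0..} \<eta>"
    by (rule eta_cont[where d="\<delta>/2"]) (use eta_smooth[where k=0] eta_1 delta in auto)
  have Em: "(\<lambda>z::'a. \<eta> (norm (e *\<^sub>R z))) \<in> borel_measurable borel" for e
  proof (rule borel_measurable_continuous_onI)
    show "continuous_on UNIV (\<lambda>z::'a. \<eta> (norm (e *\<^sub>R z)))"
      by (rule continuous_on_compose2[OF etac]) (auto intro!: continuous_intros)
  qed
  have E01: "0 \<le> \<eta> (norm z) \<and> \<eta> (norm z) \<le> 1" for z :: 'a using eta_range by simp
  define I where "I = (\<lambda>e. LINT z|lborel. W z * min \<delta> (e * norm z))"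
  define c0 where "c0 = (LINT z|lborel. W z * indicator (cball 0 (\<delta>/2)) z)"
  have intWi: "integrable lborel (\<lambda>z. W z * indicator (cball 0 (\<delta>/2)) z)"
    by (rule Bochner_Integration.integrable_bound[OF intW]) (use Wm W0 in \<open>auto simp: indicator_def less_imp_le\<close>)
  have c0pos: "c0 > 0"
  proof (rule ccontr)
    assume "\<not> c0 > 0"
    moreover have "c0 \<ge> 0" unfolding c0_def by (rule Bochner_Integration.integral_nonneg) (use W0 in \<open>auto simp: indicator_def less_imp_le\<close>)
    ultimately have "c0 = 0" by simp
    hence "AE z in lborel. W z * indicator (cball 0 (\<delta>/2)) z = 0"
      unfolding c0_def using integral_nonneg_eq_0_iff_AE[OF intWi] W0
      by (simp add: less_imp_le)
    hence "AE z in lborel. (z::'a) \<notin> cball 0 (\<delta>/2)"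
      proof eventually_elim
      case (elim z)
      then show ?case using W0[of z] by (auto simp: indicator_def split: if_splits)
    qed
    hence "emeasure lborel (cball (0::'a) (\<delta>/2)) = 0"
      by (subst (asm) AE_iff_measurable[where N="cball 0 (\<delta>/2)"]) auto
    moreover have "emeasure lborel (cball (0::'a) (\<delta>/2)) > 0"
      using delta by (simp add: emeasure_cball)
    ultimately show False by simp
  qed
  define J where "J = (\<lambda>T. LINT z|lborel. W z * min \<delta> (norm z / T))"
  have Jlim: "(J \<longlongrightarrow> 0) at_top"
  proof -
    have p1: "(\<lambda>z::'a. 0::real) \<in> borel_measurable lborel" by simp
    have p2: "(\<lambda>z. W z * min \<delta> (norm z / T)) \<in> borel_measurable lborel" for T
      using Wm by measurable
    have p3: "integrable lborel (\<lambda>z. \<delta> * W z)" using intW by simp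
    have p4: "AE z in lborel. ((\<lambda>T. W z * min \<delta> (norm z / T)) \<longlongrightarrow> 0) at_top"
      proof (rule AE_I2)
        fix z :: 'a
        have "((\<lambda>T. norm z / T) \<longlongrightarrow> 0) at_top"
          by (rule tendsto_divide_0[OF tendsto_const]) (rule filterlim_at_top_imp_at_infinity[OF filterlim_ident])
        hence "((\<lambda>T. min \<delta> (norm z / T)) \<longlongrightarrow> min \<delta> 0) at_top"
          by (intro tendsto_min tendsto_const)
        hence "((\<lambda>T. W z * min \<delta> (norm z / T)) \<longlongrightarrow> W z * min \<delta> 0) at_top"
          by (intro tendsto_mult tendsto_const)
        then show "((\<lambda>T. W z * min \<delta> (norm z / T)) \<longlongrightarrow> 0) at_top"
          using delta by simp
      qed
    have p5: "\<forall>\<^sub>F T in at_top. AE z in lborel. norm (W z * min \<delta> (norm z / T)) \<le> \<delta> * W z"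
      proof (rule eventually_mono[OF eventually_gt_at_top[of 0]], rule AE_I2)
        fix T :: real and z :: 'a assume T: "T > 0"
        have "0 \<le> min \<delta> (norm z / T)" using T delta by simp
        moreover have "min \<delta> (norm z / T) \<le> \<delta>" by simp
        ultimately show "norm (W z * min \<delta> (norm z / T)) \<le> \<delta> * W z"
          using W0[of z] by (simp add: abs_mult mult_left_mono mult.commute)
      qed
    have "((\<lambda>T. LINT z|lborel. W z * min \<delta> (norm z / T)) \<longlongrightarrow> (LINT z|lborel. (\<lambda>_. 0::real) z)) at_top"
      using integral_dominated_convergence_at_top[OF p1 p2 p3 p4 p5] by simp
    then show ?thesis by (simp add: J_def)
  qed
  have Ilim: "(I \<longlongrightarrow> 0) (at_right 0)"
  proof -
    have "((\<lambda>e. J (inverse e)) \<longlongrightarrow> 0) (at_right 0)"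
      by (rule filterlim_compose[OF Jlim filterlim_inverse_at_top_right])
    moreover have "\<forall>\<^sub>F e in at_right (0::real). J (inverse e) = I e"
      by (auto simp: eventually_at_right_field J_def I_def divide_inverse mult.commute intro!: exI[of _ 1])
    ultimately show ?thesis by (rule Lim_transform_eventually)
  qed
  have key: "norm (beta_eps \<rho> e (\<lambda>x. t e y * Psi_eps \<eta> w e y x) - y) \<le> I e / c0"
    if e: "0 < e" "e \<le> 1" and y: "y \<in> M" for e y
  proof -
    define T where "T = t e y"
    have T: "T > 0" using t_max[OF e(1) y] by (simp add: T_def)
    define c where "c = (1/e) *\<^sub>R y"
    define \<Phi> where "\<Phi> = (\<lambda>z::'a. \<eta> (norm (e *\<^sub>R z)) * w z)"
    have \<Phi>m[measurable]: "\<Phi> \<in> borel_measurable borel"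
      unfolding \<Phi>_def using Em[of e] wm by measurable
    note Um[measurable] = Upsilon_meas[of \<rho>]
    have Psi_eq: "Psi_eps \<eta> w e y x = \<Phi> (x - c)" for x
    proof -
      have 1: "e *\<^sub>R x - y = e *\<^sub>R (x - c)" using e by (simp add: c_def scaleR_diff_right)
      have 2: "(1/e) *\<^sub>R (e *\<^sub>R x - y) = x - c" using e by (simp add: c_def scaleR_diff_right)
      show ?thesis unfolding Psi_eps_def \<Phi>_def 1[symmetric] 2[symmetric] using e by simp
    qed
    define u where "u = (\<lambda>x. T * \<Phi> (x - c))"
    have um[measurable]: "u \<in> borel_measurable borel" unfolding u_def by measurable
    have ueq: "(\<lambda>x. t e y * Psi_eps \<eta> w e y x) = u" by (simp add: u_def T_def Psi_eq)
    have \<Phi>sq: "(\<Phi> z)^2 = (\<eta> (norm (e *\<^sub>R z)))^2 * W z" for z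
      by (simp add: \<Phi>_def W_def power_mult_distrib)
    have eta2: "(\<eta> (norm (e *\<^sub>R z)))^2 \<le> 1" for z :: 'a
      using E01[of "e *\<^sub>R z"] by (simp add: power_le_one)
    have \<Phi>2: "(\<Phi> z)^2 \<le> W z" for z
      using eta2[of z] W0[of z] unfolding \<Phi>sq by (simp add: mult_left_le_one_le less_imp_le)
    have intP: "integrable lborel (\<lambda>z. (\<Phi> z)^2)"
      by (rule Bochner_Integration.integrable_bound[OF intW]) (use \<Phi>2 W0 in \<open>auto intro!: AE_I2 simp: less_imp_le\<close>)
    have intU2: "integrable lborel (\<lambda>x. (u x)^2)"
      using integrable_mult_right[OF trans_integrable[OF intP, of c], of "T^2"]
      by (simp add: u_def power_mult_distrib)
    define D where "D = (LINT x|lborel. (u x)^2)"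
    have D: "D = T^2 * (LINT z|lborel. (\<Phi> z)^2)"
    proof -
      have "D = (LINT x|lborel. T^2 * (\<Phi> (x - c))^2)" by (simp add: D_def u_def power_mult_distrib)
      also have "\<dots> = T^2 * (LINT x|lborel. (\<Phi> (x - c))^2)" by simp
      also have "(LINT x|lborel. (\<Phi> (x - c))^2) = (LINT z|lborel. (\<Phi> z)^2)"
        by (rule trans_integral[where h="\<lambda>z. (\<Phi> z)^2"]) measurable
      finally show ?thesis .
    qed
    have Age: "c0 \<le> (LINT z|lborel. (\<Phi> z)^2)"
      unfolding c0_def
    proof (rule Bochner_Integration.integral_mono[OF intWi intP])
      fix z :: 'a
      show "W z * indicator (cball 0 (\<delta>/2)) z \<le> (\<Phi> z)^2"
      proof (cases "z \<in> cball 0 (\<delta>/2)")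
        case True
        have "norm (e *\<^sub>R z) \<le> norm z" using e by (simp add: mult_left_le_one_le)
        also have "\<dots> \<le> \<delta>/2" using True by simp
        finally have "\<eta> (norm (e *\<^sub>R z)) = 1" by (intro eta_1) auto
        then show ?thesis using True by (simp add: \<Phi>sq)
      qed simp
    qed
    have c0T: "T^2 * c0 \<le> D" unfolding D using Age T by simp
    have Dpos: "D > 0" using c0T c0pos T by (smt (verit) mult_pos_pos zero_less_power)
    define Y where "Y = (\<lambda>x::'a. Upsilon \<rho> (e *\<^sub>R x))"
    have Ym[measurable]: "Y \<in> borel_measurable borel" unfolding Y_def by measurable
    have intN: "integrable lborel (\<lambda>x. (u x)^2 *\<^sub>R Y x)"
    proof (rule Bochner_Integration.integrable_bound[OF integrable_mult_right[OF intU2, of \<rho>]])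
      show "(\<lambda>x. (u x)^2 *\<^sub>R Y x) \<in> borel_measurable lborel" by measurable
      show "AE x in lborel. norm ((u x)^2 *\<^sub>R Y x) \<le> norm (\<rho> * (u x)^2)"
      proof (rule AE_I2)
        fix x
        have "(u x)^2 * norm (Y x) \<le> (u x)^2 * \<rho>"
          unfolding Y_def by (rule mult_left_mono[OF Upsilon_norm[OF rho(1)]]) simp
        then show "norm ((u x)^2 *\<^sub>R Y x) \<le> norm (\<rho> * (u x)^2)"
          using rho(1) by (simp add: abs_mult mult.commute)
      qed
    qed
    have intDy: "integrable lborel (\<lambda>x. (u x)^2 *\<^sub>R y)"
      by (rule integrable_scaleR_left[OF intU2])
    have intDiff: "integrable lborel (\<lambda>x. (u x)^2 *\<^sub>R (Y x - y))"
      using Bochner_Integration.integrable_diff[OF intN intDy] by (simp add: scaleR_diff_right)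
    have Ndiff: "(LINT x|lborel. (u x)^2 *\<^sub>R (Y x - y)) = (LINT x|lborel. (u x)^2 *\<^sub>R Y x) - D *\<^sub>R y"
      using Bochner_Integration.integral_diff[OF intN intDy] by (simp add: scaleR_diff_right D_def Bochner_Integration.integral_scaleR_left[OF intU2])
    have beta: "beta_eps \<rho> e (\<lambda>x. t e y * Psi_eps \<eta> w e y x) - y
        = (1/D) *\<^sub>R (LINT x|lborel. (u x)^2 *\<^sub>R (Y x - y))"
      unfolding Ndiff ueq beta_eps_def D_def[symmetric] Y_def[symmetric]
      using Dpos by (simp add: scaleR_diff_right Y_def)
    define R where "R = (\<lambda>z::'a. W z * min \<delta> (e * norm z))"
    have Rm[measurable]: "R \<in> borel_measurable borel" unfolding R_def using Wm by measurable
    have intR: "integrable lborel R"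
      by (rule Bochner_Integration.integrable_bound[OF integrable_mult_right[OF intW, of \<delta>]])
         (use W0 delta e Rm in \<open>auto intro!: AE_I2 simp: R_def abs_mult less_imp_le mult.commute mult_left_mono\<close>)
    have pw: "norm ((u x)^2 *\<^sub>R (Y x - y)) \<le> T^2 * R (x - c)" for x
    proof -
      define z where "z = x - c"
      have ex: "e *\<^sub>R x = e *\<^sub>R z + y" using e by (simp add: z_def c_def scaleR_diff_right)
      have u2: "(u x)^2 = T^2 * ((\<eta> (norm (e *\<^sub>R z)))^2 * W z)"
        by (simp add: u_def z_def[symmetric] \<Phi>sq power_mult_distrib)
      have R0: "0 \<le> R z" using W0[of z] delta e by (simp add: R_def less_imp_le)
      show ?thesis
      proof (cases "\<eta> (norm (e *\<^sub>R z)) = 0")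
        case True
        then show ?thesis using u2 R0 by (simp add: z_def)
      next
        case False
        hence lt: "norm (e *\<^sub>R z) < \<delta>" using eta_0[of "norm (e *\<^sub>R z)"] by (meson not_less)
        have "infdist (e *\<^sub>R x) M \<le> dist (e *\<^sub>R x) y" using y by (rule infdist_le)
        also have "\<dots> = norm (e *\<^sub>R z)" by (simp add: ex dist_norm)
        finally have "infdist (e *\<^sub>R x) M \<le> \<delta>" using lt by simp
        hence "e *\<^sub>R x \<in> ball 0 \<rho>" using rho(2) by blast
        hence Yx: "Y x = e *\<^sub>R x" by (simp add: Y_def Upsilon_def)
        have nz: "norm (Y x - y) = e * norm z" using e by (simp add: Yx ex)
        have mn: "min \<delta> (e * norm z) = e * norm z" using lt e by simp
        have "norm ((u x)^2 *\<^sub>R (Y x - y)) = T^2 * ((\<eta> (norm (e *\<^sub>R z)))^2 * (W z * (e * norm z)))"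
          using W0[of z] e by (simp add: u2 nz abs_mult)
        also have "\<dots> \<le> T^2 * (1 * (W z * (e * norm z)))"
          using eta2[of z] W0[of z] e
          by (intro mult_left_mono mult_right_mono) (auto simp: less_imp_le)
        also have "\<dots> = T^2 * R z" by (simp add: R_def mn)
        finally show ?thesis by (simp add: z_def)
      qed
    qed
    have Ie: "(LINT x|lborel. T^2 * R (x - c)) = T^2 * I e"
    proof -
      have "(LINT x|lborel. T^2 * R (x - c)) = T^2 * (LINT x|lborel. R (x - c))" by simp
      also have "(LINT x|lborel. R (x - c)) = (LINT z|lborel. R z)" by (rule trans_integral) measurable
      finally show ?thesis by (simp add: I_def R_def)
    qed
    have Inn: "0 \<le> I e" unfolding I_def
      by (rule Bochner_Integration.integral_nonneg) (use W0 delta e in \<open>auto simp: less_imp_le\<close>)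
    have "norm (LINT x|lborel. (u x)^2 *\<^sub>R (Y x - y)) \<le> (LINT x|lborel. norm ((u x)^2 *\<^sub>R (Y x - y)))"
      by (rule Bochner_Integration.integral_norm_bound)
    also have "\<dots> \<le> (LINT x|lborel. T^2 * R (x - c))"
      by (rule Bochner_Integration.integral_mono[OF Bochner_Integration.integrable_norm[OF intDiff] integrable_mult_right[OF trans_integrable[OF intR]]])
         (rule pw)
    also have "\<dots> = T^2 * I e" by (rule Ie)
    finally have nb: "norm (LINT x|lborel. (u x)^2 *\<^sub>R (Y x - y)) \<le> T^2 * I e" .
    have "norm (beta_eps \<rho> e (\<lambda>x. t e y * Psi_eps \<eta> w e y x) - y)
        = norm (LINT x|lborel. (u x)^2 *\<^sub>R (Y x - y)) / D"
      using Dpos by (simp add: beta)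
    also have "\<dots> \<le> T^2 * I e / D" using nb Dpos by (simp add: divide_right_mono)
    also have "\<dots> \<le> T^2 * I e / (T^2 * c0)"
      using c0T c0pos T Inn Dpos by (intro divide_left_mono mult_nonneg_nonneg mult_pos_pos) auto
    also have "\<dots> = I e / c0" using T by simp
    finally show ?thesis .
  qed
  show ?thesis
  proof (rule uniform_limitI)
    fix r :: real assume r: "r > 0"
    have "\<forall>\<^sub>F e in at_right 0. I e < r * c0"
      using Ilim c0pos r by (auto simp: order_tendsto_iff)
    moreover have "\<forall>\<^sub>F e in at_right (0::real). 0 < e \<and> e \<le> 1"
      by (auto simp: eventually_at_right_field intro!: exI[of _ 1])
    ultimately show "\<forall>\<^sub>F e in at_right 0. \<forall>y\<in>M. dist (beta_eps \<rho> e (\<lambda>x. t e y * Psi_eps \<eta> w e y x)) y < r"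
    proof eventually_elim
      case (elim e)
      show ?case
      proof
        fix y assume "y \<in> M"
        have "norm (beta_eps \<rho> e (\<lambda>x. t e y * Psi_eps \<eta> w e y x) - y) \<le> I e / c0"
          using key elim \<open>y \<in> M\<close> by auto
        also have "\<dots> < r" using elim c0pos by (simp add: divide_less_eq)
        finally show "dist (beta_eps \<rho> e (\<lambda>x. t e y * Psi_eps \<eta> w e y x)) y < r"
          by (simp add: dist_norm)
      qed
    qed
  qed
qed


end
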